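(* Assume (a), (b) (for every dataset $z$), (d) and (e). Then the generalization error satisfies $$\bar{\bar G}(P_{\Theta|Z},P_Z)=\lambda\int\!\!\int\Big(f\Big(\frac{dP^{(Q,\lambda)}_{\Theta|Z=z}}{dQ}(\theta)\Big)+f^*\Big(-\frac{L_z(\theta)+N_{Q,z}(\lambda)}{\lambda}\Big)\Big)\Big(\frac{dP_{\Theta|Z=z}}{dP^{(Q,\lambda)}_{\Theta|Z=z}}(\theta)-\frac{dP_\Theta}{dP^{(Q,\lambda)}_{\Theta|Z=z}}(\theta)\Big)dQ(\theta)\,dP_Z(z).$$
   Context: Setting. - $\mathcal{M}\subseteq\mathbb{R}^d$; $h:\mathcal{M}\times\mathcal{X}\to\mathcal{Y}$; the loss $\ell:\mathcal{Y}\times\mathcal{Y}\to[0,\infty)$ satisfies $\ell(y,y)=0$. - For a dataset $z=((x_1,y_1),\dots,(x_n,y_n))\in(\mathcal{X}\times\mathcal{Y})^n$, $L_z(\theta)=\frac1n\sum_i\ell(h(\theta,x_i),y_i)$ and $R_z(P)=\int L_z\,dP$. - $Q$ is a Borel probability measure on $\mathcal{M}$, and $\triangle_Q(\mathcal{M})$ is the set of probability measures $P\ll Q$. Fix $\lambda>0$. - $f:[0,\infty)\to\mathbb{R}$ is convex with $f(1)=0$; $D_f(P\|Q)=\int f(\frac{dP}{dQ})dQ$. - $\dot f$ is the derivative of $f$ on $(0,\infty)$ and $\dot f^{-1}$ its inverse. - $f^*(t)=\sup_x(tx-f(x))$ is the Legendre–Fenchel transform. Assumptions. - (a) $f$ is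 strictly convex and differentiable. - (b) For the given $z$, there exists $\beta$ with $\dot f^{-1}\big(-\frac{\beta+L_z(\theta)}{\lambda}\big)>0$ on $\operatorname{supp}Q$ and $\int\dot f^{-1}\big(-\frac{\beta+L_z(\theta)}{\lambda}\big)dQ=1$. Normalization and solution. $N_{Q,z}(\lambda)$ denotes this $\beta$. $P^{(Q,\lambda)}_{\Theta|Z=z}$ is the unique minimizer of $R_z(P)+\lambda D_f(P\|Q)$ over $\triangle_Q(\mathcal{M})$, with density $\frac{dP^{(Q,\lambda)}_{\Theta|Z=z}}{dQ}(\theta)=\dot f^{-1}\big(-\frac{N_{Q,z}(\lambda)+L_z(\theta)}{\lambda}\big)$; it is mutually absolutely continuous with $Q$. Learning algorithm and generalization error. - $P_Z$ is a probability measure on $(\mathcal{X}\times\mathcal{Y})^n$. - $P_{\Theta|Z}$ is a conditional probability (learning algorithm) assigning to each dataset $z$ a probability measure $P_{\Theta|Z=z}$ on $\mathcal{M}$. - $P_\Theta(\mathcal{C})=\int P_{\Theta|Z=z}(\mathcal{C})\,dP_Z(z)$ for measurable $\mathcal{C}\subseteq\mathcal{M}$. - The generalization error is $\bar{\bar G}(P_{\Theta|Z},P_Z)=\int\!\int\big(R_u(P_{\Theta|Z=z})-R_z(P_{\Theta|Z=z})\big)dP_Z(u)\,dP_Z(z)$. Further assumptions. - (d) For all $z$, $P_{\Theta|Z=z}\ll P_\Theta$, and $P_\Theta\in\triangle_Q(\mathcal{M})$. - (e) $P_\Theta$ and $Q$ are mutually absolutely continuous. *)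

theory Defs
  imports "HOL-Probability.Probability"
begin

definition strictly_convex_on :: "real set \<Rightarrow> (real \<Rightarrow> real) \<Rightarrow> bool" where
  "strictly_convex_on A f \<longleftrightarrow>
     (\<forall>x\<in>A. \<forall>y\<in>A. \<forall>t::real. x \<noteq> y \<and> 0 < t \<and> t < 1 \<longrightarrow>
        f ((1 - t) * x + t * y) < (1 - t) * f x + t * f y)"

definition fdot_inv :: "(real \<Rightarrow> real) \<Rightarrow> real \<Rightarrow> real" where
  "fdot_inv f t = (THE x. 0 < x \<and> deriv f x = t)"

definition fstar :: "(real \<Rightarrow> real) \<Rightarrow> real \<Rightarrow> real" where
  "fstar f t = (SUP x\<in>{0..}. t * x - f x)"

definition emp_risk ::
  "('m \<Rightarrow> 'x \<Rightarrow> 'y) \<Rightarrow> ('y \<Rightarrow> 'y \<Rightarrow> real) \<Rightarrow> ('x \<times> 'y) list \<Rightarrow> 'm \<Rightarrow> real" where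
  "emp_risk h loss z \<theta> =
     (\<Sum>i<length z. loss (h \<theta> (fst (z ! i))) (snd (z ! i))) / real (length z)"

definition exp_risk ::
  "('m \<Rightarrow> 'x \<Rightarrow> 'y) \<Rightarrow> ('y \<Rightarrow> 'y \<Rightarrow> real) \<Rightarrow> ('x \<times> 'y) list \<Rightarrow> 'm measure \<Rightarrow> real" where
  "exp_risk h loss z P = (\<integral>\<theta>. emp_risk h loss z \<theta> \<partial>P)"

definition normalizer ::
  "(real \<Rightarrow> real) \<Rightarrow> 'm measure \<Rightarrow> real \<Rightarrow> ('m \<Rightarrow> real) \<Rightarrow> real" where
  "normalizer f Q lam Lz =
     (THE \<beta>. (AE \<theta> in Q. - (\<beta> + Lz \<theta>) / lam \<in> deriv f ` {0<..}) \<and>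
             (\<integral>\<theta>. fdot_inv f (- (\<beta> + Lz \<theta>) / lam) \<partial>Q) = 1)"

definition gibbs_density ::
  "(real \<Rightarrow> real) \<Rightarrow> 'm measure \<Rightarrow> real \<Rightarrow> ('m \<Rightarrow> real) \<Rightarrow> 'm \<Rightarrow> real" where
  "gibbs_density f Q lam Lz \<theta> = fdot_inv f (- (normalizer f Q lam Lz + Lz \<theta>) / lam)"

definition gibbs_measure ::
  "(real \<Rightarrow> real) \<Rightarrow> 'm measure \<Rightarrow> real \<Rightarrow> ('m \<Rightarrow> real) \<Rightarrow> 'm measure" where
  "gibbs_measure f Q lam Lz = density Q (\<lambda>\<theta>. ennreal (gibbs_density f Q lam Lz \<theta>))"

definition gen_error ::
  "('m \<Rightarrow> 'x \<Rightarrow> 'y) \<Rightarrow> ('y \<Rightarrow> 'y \<Rightarrow> real) \<Rightarrow> (('x \<times> 'y) list \<Rightarrow> 'm measure)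
     \<Rightarrow> ('x \<times> 'y) list measure \<Rightarrow> real" where
  "gen_error h loss K PZ =
     (\<integral>z. (\<integral>u. exp_risk h loss u (K z) - exp_risk h loss z (K z) \<partial>PZ) \<partial>PZ)"

end

theory Submission imports Defs begin

context
  fixes f :: "real \<Rightarrow> real"
  assumes cvx: "convex_on {0..} f"
    and sc: "strictly_convex_on {0..} f"
    and dif: "\<And>x. x > 0 \<Longrightarrow> f differentiable (at x)"
begin

lemma fd_der: "x > 0 \<Longrightarrow> (f has_real_derivative deriv f x) (at x)"
  using dif DERIV_deriv_iff_real_differentiable by blast

lemma fd_tangent:
  assumes "x > 0" "y \<ge> 0"
  shows "f y \<ge> f x + deriv f x * (y - x)"
proof -
  have "f y - f x \<ge> deriv f x * (y - x)"
    apply (rule convex_on_imp_above_tangent[OF cvx])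
    using assms by (auto intro: has_field_derivative_at_within fd_der)
  then show ?thesis by simp
qed

lemma fd_strict_mono:
  assumes "0 < x" "x < y"
  shows "deriv f x < deriv f y"
proof -
  have a: "f y \<ge> f x + deriv f x * (y - x)" using fd_tangent assms by auto
  have b: "f x \<ge> f y + deriv f y * (x - y)" using fd_tangent assms by auto
  have le: "deriv f x \<le> deriv f y"
  proof -
    have "(deriv f y - deriv f x) * (y - x) \<ge> 0" using a b by (simp add: algebra_simps)
    then show ?thesis using assms by (simp add: zero_le_mult_iff)
  qed
  show ?thesis
  proof (rule ccontr)
    assume "\<not> ?thesis"
    then have eq: "deriv f x = deriv f y" using le by simp
    define m where "m = (1 - 1/2) * x + (1/2) * y"
    have lin: "f y = f x + deriv f x * (y - x)" using a b eq by (simp add: algebra_simps)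
    have "f m < (1 - 1/2) * f x + (1/2) * f y"
      using sc[unfolded strictly_convex_on_def, rule_format, of x y "1/2"] assms unfolding m_def by auto
    moreover have "f m \<ge> f x + deriv f x * (m - x)" using fd_tangent[of x m] assms unfolding m_def by auto
    ultimately show False using lin unfolding m_def by (simp add: algebra_simps)
  qed
qed

lemma fd_inj: "0 < x \<Longrightarrow> 0 < y \<Longrightarrow> deriv f x = deriv f y \<Longrightarrow> x = y"
  using fd_strict_mono by (metis linorder_neqE_linordered_idom less_irrefl)

lemma fdot_inv_R:
  assumes "s \<in> deriv f ` {0<..}"
  shows "fdot_inv f s > 0 \<and> deriv f (fdot_inv f s) = s"
proof -
  obtain x where x: "x > 0" "deriv f x = s" using assms by auto
  have "fdot_inv f s = x" unfolding fdot_inv_def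
    by (rule the_equality) (use x fd_inj in auto)
  then show ?thesis using x by simp
qed

lemma fdot_inv_notR:
  assumes "s \<notin> deriv f ` {0<..}"
  shows "fdot_inv f s = (THE x::real. False)"
proof -
  have "(\<lambda>x. 0 < x \<and> deriv f x = s) = (\<lambda>x. False)" using assms by auto
  then show ?thesis unfolding fdot_inv_def by simp
qed

lemma fdot_inv_strict:
  assumes "s \<in> deriv f ` {0<..}" "s' \<in> deriv f ` {0<..}" "s < s'"
  shows "fdot_inv f s < fdot_inv f s'"
  using fdot_inv_R[OF assms(1)] fdot_inv_R[OF assms(2)] assms(3) fd_strict_mono
  by (metis not_less_iff_gr_or_eq)

lemma fenchel:
  assumes "s \<in> deriv f ` {0<..}"
  shows "f (fdot_inv f s) + fstar f s = s * fdot_inv f s"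
proof -
  define x where "x = fdot_inv f s"
  have x: "x > 0" "deriv f x = s" using fdot_inv_R[OF assms] x_def by auto
  have "fstar f s = s * x - f x"
    unfolding fstar_def
    apply (rule cSup_eq_maximum)
    using x fd_tangent[OF x(1)] by (auto simp: algebra_simps)
  then show ?thesis unfolding x_def by simp
qed

lemma R_interval: "is_interval (deriv f ` {0<..})"
  unfolding is_interval_1
proof (intro ballI allI impI)
  fix a b y assume ab: "a \<in> deriv f ` {0<..}" "b \<in> deriv f ` {0<..}" and y: "a \<le> y \<and> y \<le> b"
  obtain p q where pq: "p > 0" "q > 0" "a = deriv f p" "b = deriv f q" using ab by auto
  show "y \<in> deriv f ` {0<..}"
  proof (cases "y = a \<or> y = b")
    case True then show ?thesis using ab by auto
  next
    case False
    then have ay: "a < y" "y < b" using y by auto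
    have pq_lt: "p < q" using ay pq fd_strict_mono by (metis less_trans not_less_iff_gr_or_eq)
    define phi where "phi x = f x - y * x" for x
    have dphi: "(phi has_real_derivative (deriv f x - y)) (at x)" if "x > 0" for x
      unfolding phi_def using fd_der[OF that] by (auto intro!: derivative_eq_intros)
    have cont: "continuous_on {p..q} phi"
      using pq pq_lt by (intro continuous_at_imp_continuous_on ballI DERIV_isCont[OF dphi]) auto
    obtain c where c: "c \<in> {p..q}" "\<And>x. x \<in> {p..q} \<Longrightarrow> phi c \<le> phi x"
      using continuous_attains_inf[OF compact_Icc _ cont] pq_lt by auto
    have "c \<noteq> p"
    proof
      assume cp: "c = p"
      obtain d where d: "d > 0" "\<And>h. h > 0 \<Longrightarrow> h < d \<Longrightarrow> phi p > phi (p + h)"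
        using DERIV_neg_dec_right[OF dphi[OF pq(1)]] ay pq by auto
      define h where "h = min (d/2) (q - p)"
      have "phi p > phi (p + h)" using d pq_lt unfolding h_def by auto
      moreover have "p + h \<in> {p..q}" using d pq_lt unfolding h_def by auto
      ultimately show False using c(2) cp by fastforce
    qed
    moreover have "c \<noteq> q"
    proof
      assume cq: "c = q"
      obtain d where d: "d > 0" "\<And>h. h > 0 \<Longrightarrow> h < d \<Longrightarrow> phi (q - h) < phi q"
        using DERIV_pos_inc_left[OF dphi[OF pq(2)]] ay pq by auto
      define h where "h = min (d/2) (q - p)"
      have "phi (q - h) < phi q" using d pq_lt unfolding h_def by auto
      moreover have "q - h \<in> {p..q}" using d pq_lt unfolding h_def by auto
      ultimately show False using c(2) cq by fastforce
    qed
    ultimately have cin: "p < c" "c < q" using c(1) by auto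
    have "deriv f c - y = 0"
    proof (rule DERIV_local_min[OF dphi])
      show "c > 0" using cin pq by auto
      show "0 < min (c - p) (q - c)" using cin by auto
      show "\<forall>x. \<bar>c - x\<bar> < min (c - p) (q - c) \<longrightarrow> phi c \<le> phi x"
        using c(2) by (auto simp: abs_if split: if_splits)
    qed
    then show ?thesis using cin pq by force
  qed
qed

lemma fdot_inv_measurable: "fdot_inv f \<in> borel_measurable borel"
proof -
  let ?R = "deriv f ` {0<..}"
  have "mono_on ?R (fdot_inv f)"
    by (rule mono_onI) (metis fdot_inv_strict order_le_less)
  then have "fdot_inv f \<in> borel_measurable (restrict_space borel ?R)"
    by (rule borel_measurable_mono_on_fnc)
  then have "(\<lambda>s. if s \<in> ?R then fdot_inv f s else (THE x::real. False)) \<in> borel_measurable borel"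
    by (subst measurable_restrict_space_iff[symmetric]) (auto intro: real_interval_borel_measurable R_interval)
  also have "(\<lambda>s. if s \<in> ?R then fdot_inv f s else (THE x::real. False)) = fdot_inv f"
    using fdot_inv_notR by auto
  finally show ?thesis .
qed

end

lemma fstar_measurable: "fstar f \<in> borel_measurable borel"
proof -
  define D where "D = {s. bdd_above ((\<lambda>x. s * x - f x) ` {0..})}"
  have Ddown: "s \<in> D" if sD: "s' \<in> D" and ss: "s \<le> s'" for s s'
  proof -
    obtain B where B: "\<And>x. x \<ge> 0 \<Longrightarrow> s' * x - f x \<le> B" using sD unfolding D_def bdd_above_def by (auto simp: image_iff)
    have "s * x - f x \<le> B" if "x \<ge> 0" for x
      using B[OF that] mult_right_mono[OF ss that] by linarith
    then show ?thesis unfolding D_def bdd_above_def by auto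
  qed
  have Dint: "is_interval D" unfolding is_interval_1 using Ddown by blast
  have "mono_on D (fstar f)"
  proof (rule mono_onI)
    fix s s' assume "s \<in> D" "s' \<in> D" "s \<le> s'"
    then show "fstar f s \<le> fstar f s'" unfolding fstar_def
      by (intro cSUP_mono) (auto simp: D_def intro!: bexI mult_right_mono)
  qed
  then have "fstar f \<in> borel_measurable (restrict_space borel D)"
    by (rule borel_measurable_mono_on_fnc)
  then have "(\<lambda>s. if s \<in> D then fstar f s else (LEAST z::real. False)) \<in> borel_measurable borel"
    by (subst measurable_restrict_space_iff[symmetric]) (auto intro: real_interval_borel_measurable Dint)
  also have "(\<lambda>s. if s \<in> D then fstar f s else (LEAST z::real. False)) = fstar f"
  proof
    fix s show "(if s \<in> D then fstar f s else (LEAST z::real. False)) = fstar f s"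
    proof (cases "s \<in> D")
      case False
      then have "(\<lambda>z. \<forall>x\<in>(\<lambda>x. s * x - f x) ` {0..}. x \<le> z) = (\<lambda>z. False)"
        unfolding D_def bdd_above_def by (auto simp: fun_eq_iff)
      then show ?thesis using False unfolding fstar_def Sup_real_def by simp
    qed simp
  qed
  finally show ?thesis .
qed

lemma F_measurable:
  assumes cvx: "convex_on {0..} f" and sc: "strictly_convex_on {0..} f"
    and dif: "\<And>x. x > 0 \<Longrightarrow> f differentiable (at x)"
  shows "(\<lambda>s. f (fdot_inv f s) + fstar f s) \<in> borel_measurable borel"
proof -
  let ?R = "deriv f ` {0<..}"
  have [measurable]: "fdot_inv f \<in> borel_measurable borel" "fstar f \<in> borel_measurable borel"
    using fdot_inv_measurable[OF cvx sc dif] fstar_measurable by auto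
  have Rb: "?R \<in> sets borel" by (intro real_interval_borel_measurable R_interval[OF cvx sc dif])
  have "(\<lambda>s. if s \<in> ?R then s * fdot_inv f s else f (THE x::real. False) + fstar f s) \<in> borel_measurable borel"
    by (rule measurable_If_set) (use Rb in auto)
  also have "(\<lambda>s. if s \<in> ?R then s * fdot_inv f s else f (THE x::real. False) + fstar f s) = (\<lambda>s. f (fdot_inv f s) + fstar f s)"
    using fenchel[OF cvx sc dif] fdot_inv_notR[OF cvx sc dif] by (auto simp: fun_eq_iff)
  finally show ?thesis .
qed


lemma gibbs_int:
  fixes Q M :: "'a measure" and g h :: "'a \<Rightarrow> real"
  assumes Qp: "prob_space Q" and gm[measurable]: "g \<in> borel_measurable Q"
    and gpos: "AE x in Q. g x > 0" and gint: "integrable Q g"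
    and Mfin: "finite_measure M" and Msets: "sets M = sets Q"
    and Mac: "absolutely_continuous Q M"
    and hm[measurable]: "h \<in> borel_measurable Q" and hint: "integrable M h"
  shows "integrable Q (\<lambda>x. h x * g x * enn2real (RN_deriv (density Q (\<lambda>x. ennreal (g x))) M x))"
    and "(\<integral>x. h x * g x * enn2real (RN_deriv (density Q (\<lambda>x. ennreal (g x))) M x) \<partial>Q) = (\<integral>x. h x \<partial>M)"
proof -
  define G where "G = density Q (\<lambda>x. ennreal (g x))"
  define r where "r = RN_deriv G M"
  have Gsets: "sets G = sets Q" unfolding G_def by simp
  have "emeasure G (space G) = (\<integral>\<^sup>+x. ennreal (g x) \<partial>Q)"
    unfolding G_def by (simp add: emeasure_density cong: nn_integral_cong)
  also have "\<dots> = ennreal (\<integral>x. g x \<partial>Q)"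
    using gint gpos by (intro nn_integral_eq_integral) (auto elim: AE_mp)
  finally have "finite_measure G" by (intro finite_measureI) simp
  then interpret G: finite_measure G .
  interpret M: finite_measure M by fact
  have acG: "absolutely_continuous G M"
    unfolding absolutely_continuous_def
  proof
    fix A assume "A \<in> null_sets G"
    then have A: "A \<in> sets Q" "AE x in Q. x \<in> A \<longrightarrow> ennreal (g x) = 0"
      unfolding G_def by (subst (asm) null_sets_density_iff; simp)+
    have "AE x in Q. x \<notin> A" using A(2) gpos by eventually_elim auto
    then have "A \<in> null_sets Q" using A(1) by (simp add: AE_iff_null_sets)
    then show "A \<in> null_sets M" using Mac unfolding absolutely_continuous_def by auto
  qed
  have MG: "sets M = sets G" using Msets Gsets by simp
  have dens: "density G r = M" unfolding r_def
    by (rule G.density_RN_deriv[OF acG MG])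
  have rm[measurable]: "r \<in> borel_measurable Q"
    unfolding r_def using borel_measurable_RN_deriv measurable_cong_sets Gsets by blast
  have fin: "AE x in G. r x \<noteq> \<infinity>" unfolding r_def
    by (rule G.RN_deriv_finite) (use M.sigma_finite_measure acG MG in auto)
  then have finQ: "AE x in Q. r x \<noteq> \<infinity>"
    unfolding G_def using gpos by (subst (asm) AE_density) (auto elim: AE_mp)
  define d where "d x = g x * enn2real (r x)" for x
  have dm[measurable]: "d \<in> borel_measurable Q" unfolding d_def by measurable
  have dnn: "AE x in Q. 0 \<le> d x" using gpos unfolding d_def by (auto elim: AE_mp)
  have "M = density Q (\<lambda>x. ennreal (g x) * r x)"
    using dens unfolding G_def by (subst (asm) density_density_eq) auto
  also have "\<dots> = density Q d"
  proof (rule density_cong)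
    show "AE x in Q. ennreal (g x) * r x = ennreal (d x)"
      using finQ gpos by eventually_elim (auto simp: d_def ennreal_mult ennreal_enn2real less_top)
  qed auto
  finally have Md: "M = density Q d" .
  have eqf: "(\<lambda>x. h x * g x * enn2real (RN_deriv (density Q (\<lambda>x. ennreal (g x))) M x)) = (\<lambda>x. d x *\<^sub>R h x)"
    unfolding d_def r_def G_def by (auto simp: fun_eq_iff)
  show "integrable Q (\<lambda>x. h x * g x * enn2real (RN_deriv (density Q (\<lambda>x. ennreal (g x))) M x))"
    unfolding eqf using hint unfolding Md by (subst (asm) integrable_density) (auto simp: dnn)
  show "(\<integral>x. h x * g x * enn2real (RN_deriv (density Q (\<lambda>x. ennreal (g x))) M x) \<partial>Q) = (\<integral>x. h x \<partial>M)"
  proof -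
    have "(\<integral>x. d x *\<^sub>R h x \<partial>Q) = (\<integral>x. h x \<partial>density Q d)"
      by (subst integral_density) (auto simp: dnn)
    then show ?thesis unfolding eqf using Md by simp
  qed
qed


lemma normalizer_spec:
  fixes Q :: "'a measure" and Lz :: "'a \<Rightarrow> real"
  assumes cvx: "convex_on {0..} f" and sc: "strictly_convex_on {0..} f"
    and dif: "\<And>x. x > 0 \<Longrightarrow> f differentiable (at x)"
    and Qp: "prob_space Q" and lam: "lam > 0"
    and ex: "\<exists>\<beta>. (AE \<theta> in Q. - (\<beta> + Lz \<theta>) / lam \<in> deriv f ` {0<..}) \<and>
         (\<integral>\<theta>. fdot_inv f (- (\<beta> + Lz \<theta>) / lam) \<partial>Q) = 1"
  shows "(AE \<theta> in Q. - (normalizer f Q lam Lz + Lz \<theta>) / lam \<in> deriv f ` {0<..}) \<and>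
         (\<integral>\<theta>. fdot_inv f (- (normalizer f Q lam Lz + Lz \<theta>) / lam) \<partial>Q) = 1"
proof -
  define P where "P \<beta> \<longleftrightarrow> (AE \<theta> in Q. - (\<beta> + Lz \<theta>) / lam \<in> deriv f ` {0<..}) \<and>
         (\<integral>\<theta>. fdot_inv f (- (\<beta> + Lz \<theta>) / lam) \<partial>Q) = 1" for \<beta>
  have noless: False if "P b1" "P b2" "b1 < b2" for b1 b2
  proof -
    define g1 where "g1 \<theta> = fdot_inv f (- (b1 + Lz \<theta>) / lam)" for \<theta>
    define g2 where "g2 \<theta> = fdot_inv f (- (b2 + Lz \<theta>) / lam)" for \<theta>
    have i1: "integrable Q g1" using that(1) unfolding P_def g1_def
      using not_integrable_integral_eq by fastforce
    have i2: "integrable Q g2" using that(2) unfolding P_def g2_def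
      using not_integrable_integral_eq by fastforce
    have lt: "AE \<theta> in Q. g2 \<theta> < g1 \<theta>"
      using that unfolding P_def
    proof (elim conjE)
      assume a1: "AE \<theta> in Q. - (b1 + Lz \<theta>) / lam \<in> deriv f ` {0<..}"
        and a2: "AE \<theta> in Q. - (b2 + Lz \<theta>) / lam \<in> deriv f ` {0<..}"
      show ?thesis using a1 a2
      proof eventually_elim
        case (elim \<theta>)
        have "- (b2 + Lz \<theta>) / lam < - (b1 + Lz \<theta>) / lam"
          using lam \<open>b1 < b2\<close> by (simp add: divide_strict_right_mono)
        then show ?case unfolding g1_def g2_def
          using fdot_inv_strict[OF cvx sc dif] elim by blast
      qed
    qed
    have "(\<integral>\<theta>. g1 \<theta> - g2 \<theta> \<partial>Q) = 0"
      using that i1 i2 unfolding P_def g1_def g2_def by (simp add: Bochner_Integration.integral_diff)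
    then have "AE \<theta> in Q. g1 \<theta> - g2 \<theta> = 0"
      using i1 i2 lt by (subst (asm) integral_nonneg_eq_0_iff_AE) (auto elim: AE_mp)
    with lt have "AE \<theta> in Q. False" by eventually_elim auto
    then show False using prob_space.AE_False[OF Qp] by simp
  qed
  have "P (THE \<beta>. P \<beta>)"
  proof (rule theI')
    show "\<exists>!\<beta>. P \<beta>" using ex noless unfolding P_def[symmetric]
      by (metis linorder_neqE_linordered_idom)
  qed
  then show ?thesis unfolding P_def normalizer_def by blast
qed


lemma inner_z:
  fixes Q Kz PT :: "'a measure" and Lz :: "'a \<Rightarrow> real"
  assumes cvx: "convex_on {0..} f" and sc: "strictly_convex_on {0..} f"
    and dif: "\<And>x. x > 0 \<Longrightarrow> f differentiable (at x)"
    and Qp: "prob_space Q" and lam: "lam > 0"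
    and Lm[measurable]: "Lz \<in> borel_measurable Q"
    and ex: "\<exists>\<beta>. (AE \<theta> in Q. - (\<beta> + Lz \<theta>) / lam \<in> deriv f ` {0<..}) \<and>
         (\<integral>\<theta>. fdot_inv f (- (\<beta> + Lz \<theta>) / lam) \<partial>Q) = 1"
    and Kp: "prob_space Kz" and Ks: "sets Kz = sets Q" and Kac: "absolutely_continuous Q Kz"
    and Ki: "integrable Kz Lz"
    and Pp: "prob_space PT" and Ps: "sets PT = sets Q" and Pac: "absolutely_continuous Q PT"
    and Pi: "integrable PT Lz"
  shows "lam * (\<integral>\<theta>. (f (gibbs_density f Q lam Lz \<theta>)
          + fstar f (- (Lz \<theta> + normalizer f Q lam Lz) / lam))
       * (enn2real (RN_deriv (gibbs_measure f Q lam Lz) Kz \<theta>)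
          - enn2real (RN_deriv (gibbs_measure f Q lam Lz) PT \<theta>)) \<partial>Q)
     = (\<integral>\<theta>. Lz \<theta> \<partial>PT) - (\<integral>\<theta>. Lz \<theta> \<partial>Kz)"
proof -
  define N where "N = normalizer f Q lam Lz"
  define t where "t \<theta> = - (N + Lz \<theta>) / lam" for \<theta>
  define g where "g \<theta> = fdot_inv f (t \<theta>)" for \<theta>
  have spec: "(AE \<theta> in Q. t \<theta> \<in> deriv f ` {0<..})" "(\<integral>\<theta>. g \<theta> \<partial>Q) = 1"
    using normalizer_spec[OF cvx sc dif Qp lam ex] unfolding t_def g_def N_def by auto
  have tm[measurable]: "t \<in> borel_measurable Q" unfolding t_def by measurable
  have gm[measurable]: "g \<in> borel_measurable Q" unfolding g_def
    by (rule measurable_compose[OF tm fdot_inv_measurable[OF cvx sc dif]])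
  have gpos: "AE \<theta> in Q. g \<theta> > 0" using spec(1) unfolding g_def
    by eventually_elim (use fdot_inv_R[OF cvx sc dif] in auto)
  have gint: "integrable Q g" using spec(2) not_integrable_integral_eq by fastforce
  have gd: "gibbs_density f Q lam Lz = g" unfolding g_def t_def N_def gibbs_density_def by simp
  have gmeas: "gibbs_measure f Q lam Lz = density Q (\<lambda>x. ennreal (g x))"
    unfolding gibbs_measure_def gd ..
  have targ: "- (Lz \<theta> + normalizer f Q lam Lz) / lam = t \<theta>" for \<theta>
    unfolding t_def N_def by (simp add: add.commute)
  define rK where "rK \<theta> = enn2real (RN_deriv (density Q (\<lambda>x. ennreal (g x))) Kz \<theta>)" for \<theta>
  define rP where "rP \<theta> = enn2real (RN_deriv (density Q (\<lambda>x. ennreal (g x))) PT \<theta>)" for \<theta>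
  have rKm[measurable]: "rK \<in> borel_measurable Q" unfolding rK_def
    using borel_measurable_RN_deriv measurable_cong_sets by (metis borel_measurable_enn2real sets_density)
  have rPm[measurable]: "rP \<in> borel_measurable Q" unfolding rP_def
    using borel_measurable_RN_deriv measurable_cong_sets by (metis borel_measurable_enn2real sets_density)
  interpret K: prob_space Kz by fact
  interpret P: prob_space PT by fact
  have tK: "integrable Kz t" unfolding t_def using Ki by auto
  have tP: "integrable PT t" unfolding t_def using Pi by auto
  have tmK: "t \<in> borel_measurable Kz" using tm Ks by (simp cong: measurable_cong_sets)
  have tmP: "t \<in> borel_measurable PT" using tm Ps by (simp cong: measurable_cong_sets)
  note GK = gibbs_int[OF Qp gm gpos gint K.finite_measure_axioms Ks Kac tm tK]
  note GP = gibbs_int[OF Qp gm gpos gint P.finite_measure_axioms Ps Pac tm tP]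
  have Fm: "(\<lambda>\<theta>. f (g \<theta>) + fstar f (t \<theta>)) \<in> borel_measurable Q"
    unfolding g_def by (rule measurable_compose[OF tm F_measurable[OF cvx sc dif]])
  have "(\<integral>\<theta>. (f (g \<theta>) + fstar f (t \<theta>)) * (rK \<theta> - rP \<theta>) \<partial>Q)
      = (\<integral>\<theta>. t \<theta> * g \<theta> * rK \<theta> - t \<theta> * g \<theta> * rP \<theta> \<partial>Q)"
  proof (rule integral_cong_AE)
    show "(\<lambda>\<theta>. (f (g \<theta>) + fstar f (t \<theta>)) * (rK \<theta> - rP \<theta>)) \<in> borel_measurable Q"
      using Fm by measurable
    show "(\<lambda>\<theta>. t \<theta> * g \<theta> * rK \<theta> - t \<theta> * g \<theta> * rP \<theta>) \<in> borel_measurable Q" by measurable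
    show "AE \<theta> in Q. (f (g \<theta>) + fstar f (t \<theta>)) * (rK \<theta> - rP \<theta>) = t \<theta> * g \<theta> * rK \<theta> - t \<theta> * g \<theta> * rP \<theta>"
      using spec(1) by eventually_elim (simp add: g_def fenchel[OF cvx sc dif] right_diff_distrib)
  qed
  also have "\<dots> = (\<integral>\<theta>. t \<theta> \<partial>Kz) - (\<integral>\<theta>. t \<theta> \<partial>PT)"
    using GK GP unfolding rK_def rP_def by (simp add: Bochner_Integration.integral_diff)
  also have "(\<integral>\<theta>. t \<theta> \<partial>Kz) = - (N + (\<integral>\<theta>. Lz \<theta> \<partial>Kz)) / lam"
    unfolding t_def using Ki by (simp add: Bochner_Integration.integral_add K.prob_space)
  also have "(\<integral>\<theta>. t \<theta> \<partial>PT) = - (N + (\<integral>\<theta>. Lz \<theta> \<partial>PT)) / lam"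
    unfolding t_def using Pi by (simp add: Bochner_Integration.integral_add P.prob_space)
  finally have eq: "(\<integral>\<theta>. (f (g \<theta>) + fstar f (t \<theta>)) * (rK \<theta> - rP \<theta>) \<partial>Q)
     = - (N + (\<integral>\<theta>. Lz \<theta> \<partial>Kz)) / lam - - (N + (\<integral>\<theta>. Lz \<theta> \<partial>PT)) / lam" .
  show ?thesis
    unfolding targ gd gmeas rK_def[symmetric] rP_def[symmetric] eq using lam
    by (simp add: field_simps)
qed


theorem theorem5:
  fixes Mset :: "(real ^ 'd) set"
    and Q :: "(real ^ 'd) measure"
    and h :: "real ^ 'd \<Rightarrow> 'x \<Rightarrow> 'y"
    and loss :: "'y \<Rightarrow> 'y \<Rightarrow> real"
    and f :: "real \<Rightarrow> real"
    and lam :: real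
    and n :: nat
    and PZ :: "('x \<times> 'y) list measure"
    and K :: "('x \<times> 'y) list \<Rightarrow> (real ^ 'd) measure"
  defines "L \<equiv> emp_risk h loss"
    and "PTheta \<equiv> PZ \<bind> K"
  assumes Q_sets: "sets Q = sets (restrict_space borel Mset)"
    and Q_prob: "prob_space Q"
    and loss_nonneg: "\<And>y y'. loss y y' \<ge> 0"
    and loss_diag: "\<And>y. loss y y = 0"
    and lam_pos: "lam > 0"
    and f_convex: "convex_on {0..} f"
    and f_one: "f 1 = 0"
    and f_strict: "strictly_convex_on {0..} f"
    and f_diff: "\<And>x. x > 0 \<Longrightarrow> f differentiable (at x)"
    and b_cond: "\<And>z. z \<in> space PZ \<Longrightarrow> \<exists>\<beta>.
         (AE \<theta> in Q. - (\<beta> + L z \<theta>) / lam \<in> deriv f ` {0<..}) \<and>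
         (\<integral>\<theta>. fdot_inv f (- (\<beta> + L z \<theta>) / lam) \<partial>Q) = 1"
    and n_pos: "n > 0"
    and PZ_space: "space PZ = {z. length z = n}"
    and PZ_prob: "prob_space PZ"
    and K_kernel: "K \<in> measurable PZ (prob_algebra Q)"
    and L_meas: "(\<lambda>(z, \<theta>). L z \<theta>) \<in> borel_measurable (PZ \<Otimes>\<^sub>M Q)"
    and int_K: "\<And>u z. u \<in> space PZ \<Longrightarrow> z \<in> space PZ \<Longrightarrow> integrable (K z) (L u)"
    and int_PTheta: "\<And>z. z \<in> space PZ \<Longrightarrow> integrable PTheta (L z)"
    and int_prod: "integrable (PZ \<Otimes>\<^sub>M PZ) (\<lambda>(u, z). exp_risk h loss u (K z))"
    and int_diag: "integrable PZ (\<lambda>z. exp_risk h loss z (K z))"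
    and d_K: "\<And>z. z \<in> space PZ \<Longrightarrow> absolutely_continuous PTheta (K z)"
    and d_PTheta: "absolutely_continuous Q PTheta"
    and e_Q: "absolutely_continuous PTheta Q"
  shows "gen_error h loss K PZ =
    lam * (\<integral>z. (\<integral>\<theta>.
       (f (gibbs_density f Q lam (L z) \<theta>)
          + fstar f (- (L z \<theta> + normalizer f Q lam (L z)) / lam))
       * (enn2real (RN_deriv (gibbs_measure f Q lam (L z)) (K z) \<theta>)
          - enn2real (RN_deriv (gibbs_measure f Q lam (L z)) PTheta \<theta>)) \<partial>Q) \<partial>PZ)"
proof -
  interpret PZ: prob_space PZ by (rule PZ_prob)
  interpret PP: pair_sigma_finite PZ PZ
    by (simp add: pair_sigma_finite_def PZ.sigma_finite_measure_axioms)
  have Ksub[measurable]: "K \<in> PZ \<rightarrow>\<^sub>M subprob_algebra Q"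
    using K_kernel by (rule measurable_prob_algebraD)
  have Kz: "prob_space (K z) \<and> sets (K z) = sets Q" if "z \<in> space PZ" for z
    using measurable_space[OF K_kernel that] by (simp add: space_prob_algebra)
  have PZsp: "PZ \<in> space (prob_algebra PZ)" by (simp add: space_prob_algebra PZ_prob)
  have PTp: "prob_space PTheta" unfolding PTheta_def by (rule prob_space_bind'[OF PZsp K_kernel])
  have PTs: "sets PTheta = sets Q" unfolding PTheta_def by (rule sets_bind'[OF PZsp K_kernel])
  have Lz_meas[measurable]: "L z \<in> borel_measurable Q" if "z \<in> space PZ" for z
    using measurable_compose[OF measurable_Pair1'[OF that] L_meas] by simp
  have L_nonneg: "L z \<theta> \<ge> 0" for z \<theta>
    unfolding L_def emp_risk_def by (auto intro!: divide_nonneg_nonneg sum_nonneg loss_nonneg)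
  have acK: "absolutely_continuous Q (K z)" if "z \<in> space PZ" for z
    using d_K[OF that] d_PTheta unfolding absolutely_continuous_def by auto
  have expL: "exp_risk h loss u (K z) = (\<integral>\<theta>. L u \<theta> \<partial>K z)" for u z
    unfolding exp_risk_def L_def ..
  have inner: "lam * (\<integral>\<theta>.
       (f (gibbs_density f Q lam (L z) \<theta>)
          + fstar f (- (L z \<theta> + normalizer f Q lam (L z)) / lam))
       * (enn2real (RN_deriv (gibbs_measure f Q lam (L z)) (K z) \<theta>)
          - enn2real (RN_deriv (gibbs_measure f Q lam (L z)) PTheta \<theta>)) \<partial>Q)
     = (\<integral>\<theta>. L z \<theta> \<partial>PTheta) - exp_risk h loss z (K z)" if z: "z \<in> space PZ" for z
    unfolding expL
    by (rule inner_z[OF f_convex f_strict f_diff Q_prob lam_pos Lz_meas[OF z] b_cond[OF z]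
          conjunct1[OF Kz[OF z]] conjunct2[OF Kz[OF z]] acK[OF z] int_K[OF z z]
          PTp PTs d_PTheta int_PTheta[OF z]])
  define F where "F u z = exp_risk h loss u (K z)" for u z
  have Fint: "integrable (PZ \<Otimes>\<^sub>M PZ) (case_prod F)" using int_prod unfolding F_def by simp
  have Fm: "(\<lambda>z. F u z) \<in> borel_measurable PZ" if "u \<in> space PZ" for u
    using measurable_compose[OF measurable_Pair1'[OF that] borel_measurable_integrable[OF Fint]] by simp
  have C_eq: "(\<integral>\<theta>. L u \<theta> \<partial>PTheta) = (\<integral>z. F u z \<partial>PZ)" if u: "u \<in> space PZ" for u
  proof -
    have Lmb: "L u \<in> borel_measurable Q" by (rule Lz_meas[OF u])
    have "(\<integral>\<^sup>+\<theta>. ennreal (L u \<theta>) \<partial>PTheta) = (\<integral>\<^sup>+z. \<integral>\<^sup>+\<theta>. ennreal (L u \<theta>) \<partial>K z \<partial>PZ)"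
      unfolding PTheta_def by (rule nn_integral_bind[OF _ Ksub]) (use Lmb in measurable)
    also have "\<dots> = (\<integral>\<^sup>+z. ennreal (F u z) \<partial>PZ)"
    proof (rule nn_integral_cong)
      fix z assume z: "z \<in> space PZ"
      show "(\<integral>\<^sup>+\<theta>. ennreal (L u \<theta>) \<partial>K z) = ennreal (F u z)"
        unfolding F_def expL using int_K[OF u z] L_nonneg
        by (intro nn_integral_eq_integral) auto
    qed
    finally have eq1: "(\<integral>\<^sup>+\<theta>. ennreal (L u \<theta>) \<partial>PTheta) = (\<integral>\<^sup>+z. ennreal (F u z) \<partial>PZ)" .
    have eq2: "(\<integral>\<^sup>+\<theta>. ennreal (L u \<theta>) \<partial>PTheta) = ennreal (\<integral>\<theta>. L u \<theta> \<partial>PTheta)"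
      using int_PTheta[OF u] L_nonneg by (intro nn_integral_eq_integral) auto
    have Fnn: "F u z \<ge> 0" for z unfolding F_def expL using L_nonneg by (simp add: integral_nonneg)
    have fin: "(\<integral>\<^sup>+z. ennreal (F u z) \<partial>PZ) < \<top>"
      using eq1 eq2 by (metis ennreal_less_top)
    have Fi: "integrable PZ (F u)"
      by (rule integrableI_nonneg) (use Fm[OF u] Fnn fin in auto)
    have eq3: "(\<integral>\<^sup>+z. ennreal (F u z) \<partial>PZ) = ennreal (\<integral>z. F u z \<partial>PZ)"
      using Fi Fnn by (intro nn_integral_eq_integral) auto
    have "ennreal (\<integral>\<theta>. L u \<theta> \<partial>PTheta) = ennreal (\<integral>z. F u z \<partial>PZ)"
      using eq1 eq2 eq3 by simp
    moreover have "(\<integral>\<theta>. L u \<theta> \<partial>PTheta) \<ge> 0" using L_nonneg by (simp add: integral_nonneg)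
    moreover have "(\<integral>z. F u z \<partial>PZ) \<ge> 0" using Fnn by (simp add: integral_nonneg)
    ultimately show ?thesis by simp
  qed
  have Bint: "integrable PZ (\<lambda>z. exp_risk h loss z (K z))" by (rule int_diag)
  have Aint: "integrable PZ (\<lambda>z. \<integral>u. F u z \<partial>PZ)" by (rule PP.integrable_snd[OF Fint])
  have Cint0: "integrable PZ (\<lambda>u. \<integral>z. F u z \<partial>PZ)" by (rule PP.integrable_fst[OF Fint])
  have Cint: "integrable PZ (\<lambda>u. \<integral>\<theta>. L u \<theta> \<partial>PTheta)"
    using Cint0 by (subst Bochner_Integration.integrable_cong[OF refl C_eq]) auto
  have "lam * (\<integral>z. (\<integral>\<theta>.
       (f (gibbs_density f Q lam (L z) \<theta>)
          + fstar f (- (L z \<theta> + normalizer f Q lam (L z)) / lam))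
       * (enn2real (RN_deriv (gibbs_measure f Q lam (L z)) (K z) \<theta>)
          - enn2real (RN_deriv (gibbs_measure f Q lam (L z)) PTheta \<theta>)) \<partial>Q) \<partial>PZ)
     = (\<integral>z. lam * (\<integral>\<theta>.
       (f (gibbs_density f Q lam (L z) \<theta>)
          + fstar f (- (L z \<theta> + normalizer f Q lam (L z)) / lam))
       * (enn2real (RN_deriv (gibbs_measure f Q lam (L z)) (K z) \<theta>)
          - enn2real (RN_deriv (gibbs_measure f Q lam (L z)) PTheta \<theta>)) \<partial>Q) \<partial>PZ)"
    by simp
  also have "\<dots> = (\<integral>z. (\<integral>\<theta>. L z \<theta> \<partial>PTheta) - exp_risk h loss z (K z) \<partial>PZ)"
    by (rule Bochner_Integration.integral_cong[OF refl]) (rule inner)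
  also have "\<dots> = (\<integral>z. (\<integral>\<theta>. L z \<theta> \<partial>PTheta) \<partial>PZ) - (\<integral>z. exp_risk h loss z (K z) \<partial>PZ)"
    using Cint Bint by (rule Bochner_Integration.integral_diff)
  also have "(\<integral>z. (\<integral>\<theta>. L z \<theta> \<partial>PTheta) \<partial>PZ) = (\<integral>u. (\<integral>z. F u z \<partial>PZ) \<partial>PZ)"
    by (rule Bochner_Integration.integral_cong[OF refl]) (rule C_eq)
  also have "\<dots> = (\<integral>z. (\<integral>u. F u z \<partial>PZ) \<partial>PZ)"
    by (rule PP.Fubini_integral[OF Fint, symmetric])
  also have "(\<integral>z. (\<integral>u. F u z \<partial>PZ) \<partial>PZ) - (\<integral>z. exp_risk h loss z (K z) \<partial>PZ)
      = (\<integral>z. (\<integral>u. F u z \<partial>PZ) - exp_risk h loss z (K z) \<partial>PZ)"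
    using Aint Bint by (rule Bochner_Integration.integral_diff[symmetric])
  also have "\<dots> = (\<integral>z. (\<integral>u. F u z - exp_risk h loss z (K z) \<partial>PZ) \<partial>PZ)"
  proof (rule integral_cong_AE)
    have Fjm: "(\<lambda>(u, z). F u z) \<in> borel_measurable (PZ \<Otimes>\<^sub>M PZ)"
      using borel_measurable_integrable[OF Fint] by simp
    have Bm: "(\<lambda>z. exp_risk h loss z (K z)) \<in> borel_measurable PZ"
      using borel_measurable_integrable[OF int_diag] .
    show "(\<lambda>z. (\<integral>u. F u z \<partial>PZ) - exp_risk h loss z (K z)) \<in> borel_measurable PZ"
      using borel_measurable_integrable[OF Aint] Bm by measurable
    have "(\<lambda>(z, u). F u z - exp_risk h loss z (K z)) \<in> borel_measurable (PZ \<Otimes>\<^sub>M PZ)"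
    proof -
      have "(\<lambda>x. F (snd x) (fst x)) \<in> borel_measurable (PZ \<Otimes>\<^sub>M PZ)"
        using measurable_compose[OF measurable_pair_swap' Fjm] by (simp add: case_prod_beta)
      moreover have "(\<lambda>x. exp_risk h loss (fst x) (K (fst x))) \<in> borel_measurable (PZ \<Otimes>\<^sub>M PZ)"
        using measurable_compose[OF measurable_fst[of PZ PZ] Bm] by simp
      ultimately show ?thesis by (simp add: case_prod_beta' borel_measurable_diff)
    qed
    then show "(\<lambda>z. \<integral>u. F u z - exp_risk h loss z (K z) \<partial>PZ) \<in> borel_measurable PZ"
      by (rule PZ.borel_measurable_lebesgue_integral)
    show "AE z in PZ. (\<integral>u. F u z \<partial>PZ) - exp_risk h loss z (K z) = (\<integral>u. F u z - exp_risk h loss z (K z) \<partial>PZ)"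
      using PP.AE_integrable_snd[OF Fint]
      by eventually_elim (simp add: PZ.prob_space Bochner_Integration.integral_diff)
  qed
  also have "\<dots> = gen_error h loss K PZ"
    unfolding gen_error_def F_def ..
  finally show ?thesis by simp
qed

end
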